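(* An integer sequence $(a_n)_{n\ge1}$ is a strong Euler–Gauss sequence if and only if $\left(\frac{a_{p^rm}}{\gcd(a_{p^rm},a_{p^{r-1}m})}\right)^{-1}\equiv\left(\frac{a_{p^{r-1}m}}{\gcd(a_{p^rm},a_{p^{r-1}m})}\right)^{-1}\pmod{p^r}$ for all primes $p$ and all integers $r\ge1$, $m\ge1$.
   Context: $\mu$ is the Möbius function; $x^{-1}$ denotes the inverse of $x$ modulo the relevant modulus (the quotients are required to be invertible). For an integer sequence $(a_n)$ and $n\ge1$, $A_n^+=\prod_{d\mid n,\ \mu(d)=1} a_{n/d}$ and $A_n^-=\prod_{d\mid n,\ \mu(d)=-1} a_{n/d}$ (empty products equal $1$). An integer sequence is a strong Euler–Gauss sequence if for all $n\ge1$, $\left(\frac{A_n^-}{\gcd(A_n^+,A_n^-)}\right)^{-1}\equiv\left(\frac{A_n^+}{\gcd(A_n^+,A_n^-)}\right)^{-1}\pmod n$. *)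

theory Defs
  imports "HOL-Number_Theory.Number_Theory" "HOL-Computational_Algebra.Squarefree"
begin

definition moebius :: "nat \<Rightarrow> int" where
  "moebius d = (if d = 0 then 0 else if squarefree d then (-1) ^ card (prime_factors d) else 0)"

definition A_plus :: "(nat \<Rightarrow> int) \<Rightarrow> nat \<Rightarrow> int" where
  "A_plus a n = (\<Prod>d \<in> {d. d dvd n \<and> moebius d = 1}. a (n div d))"

definition A_minus :: "(nat \<Rightarrow> int) \<Rightarrow> nat \<Rightarrow> int" where
  "A_minus a n = (\<Prod>d \<in> {d. d dvd n \<and> moebius d = -1}. a (n div d))"

text \<open>x^{-1} = y^{-1} (mod n), both inverses required to exist.\<close>
definition inv_cong :: "int \<Rightarrow> int \<Rightarrow> int \<Rightarrow> bool" where
  "inv_cong x y n \<longleftrightarrow> (\<exists>u v. [x * u = 1] (mod n) \<and> [y * v = 1] (mod n) \<and> [u = v] (mod n))"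

definition strong_euler_gauss :: "(nat \<Rightarrow> int) \<Rightarrow> bool" where
  "strong_euler_gauss a \<longleftrightarrow>
     (\<forall>n\<ge>1. let g = gcd (A_plus a n) (A_minus a n) in
        inv_cong (A_minus a n div g) (A_plus a n div g) (int n))"

end

theory Submission
  imports Defs
begin


definition EE :: "int \<Rightarrow> int \<Rightarrow> int \<Rightarrow> bool" where
  "EE x y N \<longleftrightarrow> (\<exists>s t. coprime s N \<and> coprime t N \<and> x * t = y * s \<and> [s = t] (mod N))"

lemma inv_cong_iff: "inv_cong x y N \<longleftrightarrow> coprime x N \<and> coprime y N \<and> [x = y] (mod N)"
proof
  assume "inv_cong x y N"
  then obtain u v where u: "[x * u = 1] (mod N)" and v: "[y * v = 1] (mod N)" and uv: "[u = v] (mod N)"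
    unfolding inv_cong_def by blast
  have cx: "coprime x N" using u coprime_iff_invertible_int by blast
  have cy: "coprime y N" using v coprime_iff_invertible_int by blast
  have "[x = x * (y * v)] (mod N)" using cong_mult[OF cong_refl[of x] v] by (simp add: cong_sym)
  also have "[x * (y * v) = x * (y * u)] (mod N)"
    by (intro cong_mult cong_refl) (simp add: uv cong_sym)
  also have "x * (y * u) = y * (x * u)" by simp
  also have "[y * (x * u) = y * 1] (mod N)" by (intro cong_mult cong_refl u)
  finally show "coprime x N \<and> coprime y N \<and> [x = y] (mod N)" using cx cy by simp
next
  assume h: "coprime x N \<and> coprime y N \<and> [x = y] (mod N)"
  then obtain u where u: "[x * u = 1] (mod N)" using cong_solve_coprime_int by blast
  have "[y * u = x * u] (mod N)" using h by (intro cong_mult cong_refl) (simp add: cong_sym)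
  with u have "[y * u = 1] (mod N)" using cong_trans by blast
  with u show "inv_cong x y N" unfolding inv_cong_def using cong_refl by blast
qed

lemma good_iff:
  assumes "x \<noteq> 0" "y \<noteq> 0"
  shows "inv_cong (x div gcd x y) (y div gcd x y) N \<longleftrightarrow> EE x y N"
proof -
  define g where "g = gcd x y"
  define x' where "x' = x div g"
  define y' where "y' = y div g"
  have g0: "g \<noteq> 0" using assms g_def by simp
  have xe: "x = g * x'" unfolding x'_def g_def by simp
  have ye: "y = g * y'" unfolding y'_def g_def by simp
  have cop: "coprime x' y'" unfolding x'_def y'_def g_def using assms div_gcd_coprime by blast
  have x'0: "x' \<noteq> 0" using xe assms by auto
  show ?thesis unfolding g_def[symmetric] x'_def[symmetric] y'_def[symmetric] inv_cong_iff
  proof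
    assume "coprime x' N \<and> coprime y' N \<and> [x' = y'] (mod N)"
    moreover have "x * y' = y * x'" using xe ye by simp
    ultimately show "EE x y N" unfolding EE_def by blast
  next
    assume "EE x y N"
    then obtain s t where st: "coprime s N" "coprime t N" "x * t = y * s" "[s = t] (mod N)"
      unfolding EE_def by blast
    have e: "x' * t = y' * s" using st(3) xe ye g0 by simp
    hence "x' dvd y' * s" by (metis dvd_triv_left)
    hence "x' dvd s" using cop coprime_dvd_mult_right_iff by blast
    then obtain k where k: "s = x' * k" by blast
    have tk: "t = y' * k" using e k x'0 by (metis mult.left_commute mult_cancel_left)
    have cx: "coprime x' N" and ck: "coprime k N" using st(1) k by auto
    have cy: "coprime y' N" using st(2) tk by auto
    have "[x' * k = y' * k] (mod N)" using st(4) k tk by simp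
    hence "[x' = y'] (mod N)" using cong_mult_rcancel ck by blast
    with cx cy show "coprime x' N \<and> coprime y' N \<and> [x' = y'] (mod N)" by simp
  qed
qed

lemma EE_sym: "EE x y N \<Longrightarrow> EE y x N"
  unfolding EE_def by (metis cong_sym mult.commute)

lemma EE_mult: "EE x1 y1 N \<Longrightarrow> EE x2 y2 N \<Longrightarrow> EE (x1 * x2) (y1 * y2) N"
proof -
  assume "EE x1 y1 N" "EE x2 y2 N"
  then obtain s1 t1 s2 t2 where a: "coprime s1 N" "coprime t1 N" "x1 * t1 = y1 * s1" "[s1 = t1] (mod N)"
    and b: "coprime s2 N" "coprime t2 N" "x2 * t2 = y2 * s2" "[s2 = t2] (mod N)"
    unfolding EE_def by blast
  have "x1 * x2 * (t1 * t2) = y1 * y2 * (s1 * s2)"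
    by (metis a(3) b(3) mult.assoc mult.left_commute)
  moreover have "[s1 * s2 = t1 * t2] (mod N)" using a(4) b(4) cong_mult by blast
  ultimately show ?thesis unfolding EE_def using a b
    by (intro exI[of _ "s1 * s2"] exI[of _ "t1 * t2"]) auto
qed

lemma EE_cancel:
  assumes "EE (x1 * x2) (y1 * y2) N" "EE x2 y2 N" "x2 \<noteq> 0"
  shows "EE x1 y1 N"
proof -
  obtain s t where a: "coprime s N" "coprime t N" "x1 * x2 * t = y1 * y2 * s" "[s = t] (mod N)"
    using assms(1) unfolding EE_def by blast
  obtain s' t' where b: "coprime s' N" "coprime t' N" "x2 * t' = y2 * s'" "[s' = t'] (mod N)"
    using assms(2) unfolding EE_def by blast
  have "x2 * (x1 * (t * s')) = x1 * x2 * t * s'" by simp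
  also have "\<dots> = y1 * (y2 * s') * s" using a(3) by simp
  also have "\<dots> = y1 * (x2 * t') * s" using b(3) by simp
  also have "\<dots> = x2 * (y1 * (s * t'))" by simp
  finally have "x1 * (t * s') = y1 * (s * t')" using assms(3) by simp
  moreover have "[s * t' = t * s'] (mod N)"
    using a(4) b(4) by (metis cong_mult cong_sym mult.commute)
  ultimately show ?thesis unfolding EE_def using a b
    by (intro exI[of _ "s * t'"] exI[of _ "t * s'"]) auto
qed

lemma EE_dvd: "EE x y N \<Longrightarrow> M dvd N \<Longrightarrow> EE x y M"
  unfolding EE_def by (meson cong_dvd_modulus coprime_divisors dvd_refl)

lemma EE_one: "EE x y 1"
  unfolding EE_def by (rule exI[of _ x], rule exI[of _ y]) (simp add: mult.commute)

lemma EE_prod: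
  "finite S \<Longrightarrow> (\<And>i. i \<in> S \<Longrightarrow> EE (f i) (g i) N) \<Longrightarrow> EE (\<Prod>i\<in>S. f i) (\<Prod>i\<in>S. g i) N"
proof (induction S rule: finite_induct)
  case empty
  then show ?case unfolding EE_def by (auto intro!: exI[of _ 1])
next
  case (insert x F)
  then show ?case by (simp add: EE_mult)
qed

lemma EE_crt:
  assumes "x \<noteq> 0" "y \<noteq> 0" "EE x y M" "EE x y N" "coprime M N"
  shows "EE x y (M * N)"
  using assms by (simp add: good_iff[symmetric] inv_cong_iff coprime_cong_mult)



lemma moebius_prime_mult:
  fixes p e :: nat
  assumes p: "prime p" and nd: "\<not> p dvd e"
  shows "moebius (p * e) = - moebius e"
proof -
  have e0: "e \<noteq> 0" using nd by (metis dvd_0_right)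
  have p0: "p \<noteq> 0" using p by auto
  have cop: "coprime p e" using p nd by (simp add: prime_imp_coprime)
  have sq: "squarefree (p * e) \<longleftrightarrow> squarefree e"
    using squarefree_multD[of p e] squarefree_mult_coprime[OF cop] squarefree_prime[OF p] by blast
  have pf: "prime_factors (p * e) = insert p (prime_factors e)"
    using prime_factors_product[OF p0 e0] p by (simp add: prime_prime_factors)
  have pn: "p \<notin> prime_factors e" using nd by auto
  have "card (prime_factors (p * e)) = Suc (card (prime_factors e))"
    using pf pn by simp
  thus ?thesis unfolding moebius_def using sq e0 p0 by simp
qed

lemma moebius_1: "moebius 1 = 1"
  unfolding moebius_def by simp

lemma moebius_2: "moebius 2 = -1"
proof -
  have "moebius (2 * 1) = - moebius 1" by (rule moebius_prime_mult) auto
  thus ?thesis using moebius_1 by (metis mult.right_neutral)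
qed

lemma moebius_nz_sqf: "moebius d \<noteq> 0 \<Longrightarrow> squarefree d \<and> d \<noteq> 0"
  unfolding moebius_def by (auto split: if_splits)

lemma divisor_split:
  fixes p m r :: nat and c :: int
  assumes p: "prime p" and nd: "\<not> p dvd m" and r: "r \<ge> 1" and c: "c \<noteq> 0"
  shows "{d. d dvd p^r*m \<and> moebius d = c} =
         {e. e dvd m \<and> moebius e = c} \<union> (\<lambda>e. p*e) ` {e. e dvd m \<and> moebius e = -c}"
proof (intro equalityI subsetI)
  fix d assume "d \<in> {d. d dvd p^r*m \<and> moebius d = c}"
  hence dd: "d dvd p^r*m" and md: "moebius d = c" by auto
  have sq: "squarefree d" using moebius_nz_sqf md c by blast
  show "d \<in> {e. e dvd m \<and> moebius e = c} \<union> (\<lambda>e. p*e) ` {e. e dvd m \<and> moebius e = -c}"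
  proof (cases "p dvd d")
    case True
    then obtain e where de: "d = p * e" by blast
    have ne: "\<not> p dvd e"
    proof
      assume "p dvd e"
      hence "p^2 dvd d" using de by (simp add: power2_eq_square)
      thus False using sq p unfolding squarefree_def by (metis not_prime_unit)
    qed
    have pr: "p^r = p * p^(r-1)" using r by (metis Suc_diff_le diff_Suc_1 power_Suc)
    have "p * e dvd p * (p^(r-1) * m)" using dd de pr by (simp add: mult.assoc)
    hence "e dvd p^(r-1) * m" using p by (simp add: prime_gt_0_nat)
    moreover have "coprime e (p^(r-1))" using ne p
      by (metis coprime_commute coprime_power_right_iff prime_imp_coprime)
    ultimately have "e dvd m" using coprime_dvd_mult_right_iff by blast
    moreover have "moebius e = -c" using md de moebius_prime_mult[OF p ne] by simp
    ultimately show ?thesis using de by blast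
  next
    case False
    have "coprime d (p^r)" using False p
      by (metis coprime_commute coprime_power_right_iff prime_imp_coprime)
    hence "d dvd m" using dd coprime_dvd_mult_right_iff by blast
    thus ?thesis using md by blast
  qed
next
  fix d assume "d \<in> {e. e dvd m \<and> moebius e = c} \<union> (\<lambda>e. p*e) ` {e. e dvd m \<and> moebius e = -c}"
  then consider "d dvd m" "moebius d = c" | e where "d = p * e" "e dvd m" "moebius e = -c" by blast
  then show "d \<in> {d. d dvd p^r*m \<and> moebius d = c}"
  proof cases
    case 1 then show ?thesis by auto
  next
    case 2
    have ne: "\<not> p dvd e" using 2 nd dvd_trans by blast
    have pr: "p^r = p * p^(r-1)" using r by (metis Suc_diff_le diff_Suc_1 power_Suc)
    have "d dvd p^r * m" using 2 pr by (simp add: mult.assoc mult_dvd_mono)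
    moreover have "moebius d = c" using 2 moebius_prime_mult[OF p ne] by simp
    ultimately show ?thesis by simp
  qed
qed

lemma finite_S: "m \<noteq> 0 \<Longrightarrow> finite {e::nat. e dvd m \<and> P e}"
  by (rule finite_subset[of _ "{e. e dvd m}"]) auto

lemma prod_split:
  fixes p m r :: nat and c :: int
  assumes p: "prime p" and nd: "\<not> p dvd m" and r: "r \<ge> 1" and c: "c \<noteq> 0"
  shows "(\<Prod>d\<in>{d. d dvd p^r*m \<and> moebius d = c}. a (p^r*m div d)) =
         (\<Prod>e\<in>{e. e dvd m \<and> moebius e = c}. a (p^r*m div e)) *
         (\<Prod>e\<in>{e. e dvd m \<and> moebius e = -c}. a (p^(r-1)*m div e))"
proof -
  have m0: "m \<noteq> 0" using nd by (metis dvd_0_right)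
  have p0: "p > 0" using p prime_gt_0_nat by blast
  have fin1: "finite {e. e dvd m \<and> moebius e = c}" using finite_S m0 .
  have fin2: "finite {e. e dvd m \<and> moebius e = -c}" using finite_S m0 .
  have disj: "{e. e dvd m \<and> moebius e = c} \<inter> (\<lambda>e. p*e) ` {e. e dvd m \<and> moebius e = -c} = {}"
    using nd by (auto dest: dvd_mult_left)
  have inj: "inj_on (\<lambda>e. p*e) {e. e dvd m \<and> moebius e = -c}" using p0 by (auto simp: inj_on_def)
  have pr: "p^r = p * p^(r-1)" using r by (metis Suc_diff_le diff_Suc_1 power_Suc)
  have eq: "a (p^r*m div (p*e)) = a (p^(r-1)*m div e)" for e
    using pr p0 by (simp add: mult.assoc)
  have "(\<Prod>d\<in>{d. d dvd p^r*m \<and> moebius d = c}. a (p^r*m div d)) =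
     (\<Prod>e\<in>{e. e dvd m \<and> moebius e = c}. a (p^r*m div e)) *
     (\<Prod>d\<in>(\<lambda>e. p*e) ` {e. e dvd m \<and> moebius e = -c}. a (p^r*m div d))"
    unfolding divisor_split[OF p nd r c]
    by (rule prod.union_disjoint[OF fin1 finite_imageI[OF fin2] disj])
  also have "(\<Prod>d\<in>(\<lambda>e. p*e) ` {e. e dvd m \<and> moebius e = -c}. a (p^r*m div d)) =
     (\<Prod>e\<in>{e. e dvd m \<and> moebius e = -c}. a (p^r*m div (p*e)))"
    using prod.reindex[OF inj] by (simp add: comp_def)
  also have "\<dots> = (\<Prod>e\<in>{e. e dvd m \<and> moebius e = -c}. a (p^(r-1)*m div e))"
    using eq by simp
  finally show ?thesis .
qed

lemma A_split:
  fixes p m r :: nat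
  assumes p: "prime p" and nd: "\<not> p dvd m" and r: "r \<ge> 1"
  shows "A_plus a (p^r*m) =
         (\<Prod>e\<in>{e. e dvd m \<and> moebius e = 1}. a (p^r*m div e)) *
         (\<Prod>e\<in>{e. e dvd m \<and> moebius e = -1}. a (p^(r-1)*m div e))"
    and "A_minus a (p^r*m) =
         (\<Prod>e\<in>{e. e dvd m \<and> moebius e = -1}. a (p^r*m div e)) *
         (\<Prod>e\<in>{e. e dvd m \<and> moebius e = 1}. a (p^(r-1)*m div e))"
  unfolding A_plus_def A_minus_def
  using prod_split[OF p nd r, of 1 a] prod_split[OF p nd r, of "-1" a] by simp_all



lemma inv_cong_nz:
  assumes "inv_cong (x div gcd x y) (y div gcd x y) N" "N > 1"
  shows "x \<noteq> 0 \<and> y \<noteq> 0"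
proof -
  have c: "coprime (x div gcd x y) N" "coprime (y div gcd x y) N" using assms(1) inv_cong_iff by auto
  have "\<not> coprime 0 N" using assms(2) by simp
  thus ?thesis using c by auto
qed

lemma prod_nz:
  fixes m c :: nat
  assumes nz: "\<forall>k\<ge>1. a k \<noteq> (0::int)" and m: "m \<noteq> 0" and c: "c \<ge> 1"
  shows "(\<Prod>e\<in>{e. e dvd m \<and> P e}. a (c*m div e)) \<noteq> 0"
proof -
  have "a (c*m div e) \<noteq> 0" if "e dvd m" for e
  proof -
    have "c*m div e = c * (m div e)" using that by (simp add: div_mult_swap)
    moreover have "m div e \<ge> 1" using that m
      by (metis dvd_div_eq_0_iff less_one not_less)
    moreover have "c * (m div e) \<ge> 1" using c \<open>m div e \<ge> 1\<close> by (simp add: one_le_mult_iff)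
    ultimately show ?thesis using nz by simp
  qed
  thus ?thesis using finite_S[OF m] by (auto simp: prod_zero_iff)
qed

lemma A_nz:
  assumes nz: "\<forall>k\<ge>1. a k \<noteq> (0::int)" and n: "n \<noteq> 0"
  shows "A_plus a n \<noteq> 0" "A_minus a n \<noteq> 0"
  using prod_nz[OF nz n, of 1] unfolding A_plus_def A_minus_def by auto

lemma EE_ratio:
  fixes m p r :: nat
  assumes False: "m \<noteq> 0" and Q: "\<forall>e. e dvd m \<longrightarrow> EE (a (p^r * (m div e))) (a (p^(r-1) * (m div e))) N"
  shows "EE (\<Prod>e\<in>{e. e dvd m \<and> P e}. a (p^r*m div e)) (\<Prod>e\<in>{e. e dvd m \<and> P e}. a (p^(r-1)*m div e)) N"
proof (rule EE_prod[OF finite_S[OF False]])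
  fix e assume "e \<in> {e. e dvd m \<and> P e}"
  hence "e dvd m" by simp
  thus "EE (a (p^r*m div e)) (a (p^(r-1)*m div e)) N" using Q by (simp add: div_mult_swap)
qed

lemma crt_lemma:
  assumes "x \<noteq> 0" "y \<noteq> 0"
  shows "n \<noteq> 0 \<Longrightarrow> (\<forall>p. prime p \<and> p dvd n \<longrightarrow> EE x y (int (p ^ multiplicity p n))) \<Longrightarrow> EE x y (int n)"
proof (induction n rule: less_induct)
  case (less n)
  show ?case
  proof (cases "n = 1")
    case True then show ?thesis using EE_one by simp
  next
    case False
    obtain p where p: "prime p" "p dvd n" using False prime_factor_nat[of n] by blast
    have pu: "\<not> is_unit p" using p(1) not_prime_unit by blast
    define k where "k = multiplicity p n"
    define m where "m = n div p^k"
    have nm: "n = p^k * m" unfolding m_def k_def using multiplicity_dvd[of p n] by simp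
    have nd: "\<not> p dvd m" unfolding m_def k_def
      using multiplicity_decompose[of n p] less.prems(1) pu by blast
    have "k \<noteq> 0" unfolding k_def
      using multiplicity_eq_zero_iff[of n p] less.prems(1) pu p(2) by blast
    hence k1: "k \<ge> 1" by simp
    have m0: "m \<noteq> 0" using nm less.prems(1) by (metis mult_0_right)
    have pk: "p^k > 1" using k1 prime_gt_1_nat[OF p(1)] by (intro one_less_power) auto
    have mlt: "m < n" using nm pk m0 by simp
    have IHm: "EE x y (int m)"
    proof (rule less.IH[OF mlt m0], intro allI impI)
      fix q assume q: "prime q \<and> q dvd m"
      have qp: "q \<noteq> p" using q nd by blast
      have pk0: "p^k \<noteq> 0"
      proof
        assume "p^k = 0" with pk show False by simp
      qed
      have "multiplicity q n = multiplicity q (p^k) + multiplicity q m"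
        unfolding nm using prime_elem_multiplicity_mult_distrib[of q "p^k" m] q pk0 m0 by simp
      moreover have "\<not> q dvd p^k"
      proof
        assume "q dvd p^k"
        hence "q dvd p" using q prime_dvd_power by blast
        thus False using q p(1) qp primes_dvd_imp_eq by blast
      qed
      hence "multiplicity q (p^k) = 0" by (rule not_dvd_imp_multiplicity_0)
      ultimately have "multiplicity q n = multiplicity q m" by simp
      moreover have "q dvd n" using q nm by simp
      moreover have "EE x y (int (q ^ multiplicity q n))" using less.prems(2) q \<open>q dvd n\<close> by blast
      ultimately show "EE x y (int (q ^ multiplicity q m))" by simp
    qed
    have IHp: "EE x y (int (p^k))" using less.prems(2) p k_def by blast
    have "coprime p m" using nd p(1) by (simp add: prime_imp_coprime)
    hence "coprime (p^k) m" by simp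
    hence cop: "coprime (int (p^k)) (int m)" by simp
    show ?thesis using EE_crt[OF assms IHp IHm cop] nm by simp
  qed
qed



lemma seg_nz:
  assumes "strong_euler_gauss a"
  shows "\<forall>k\<ge>1. a k \<noteq> 0"
proof -
  have AN: "A_plus a n \<noteq> 0 \<and> A_minus a n \<noteq> 0" if "n \<ge> 2" for n
  proof -
    have "inv_cong (A_minus a n div gcd (A_minus a n) (A_plus a n))
                   (A_plus a n div gcd (A_minus a n) (A_plus a n)) (int n)"
      using assms that unfolding strong_euler_gauss_def Let_def by (simp add: gcd.commute)
    thus ?thesis using inv_cong_nz that by fastforce
  qed
  have fin: "finite {d. d dvd n \<and> moebius d = c}" if "n \<noteq> 0" for n :: nat and c
    using finite_S[OF that] .
  show ?thesis
  proof (intro allI impI)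
    fix k :: nat assume k: "k \<ge> 1"
    show "a k \<noteq> 0"
    proof (cases "k = 1")
      case True
      have "A_minus a 2 \<noteq> 0" using AN by simp
      moreover have "2 \<in> {d. d dvd (2::nat) \<and> moebius d = -1}" using moebius_2 by simp
      ultimately have "a (2 div 2) \<noteq> 0" unfolding A_minus_def using fin[of 2 "-1"]
        by (auto simp: prod_zero_iff)
      thus ?thesis using True by simp
    next
      case False
      have "A_plus a k \<noteq> 0" using AN False k by simp
      moreover have "1 \<in> {d. d dvd k \<and> moebius d = 1}" using moebius_1 by simp
      ultimately have "a (k div 1) \<noteq> 0" unfolding A_plus_def using fin[of k 1] k
        by (auto simp: prod_zero_iff)
      thus ?thesis by simp
    qed
  qed
qed

lemma Q_nz:
  assumes "\<forall>p r m. prime p \<and> r \<ge> 1 \<and> m \<ge> 1 \<longrightarrow>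
      (let g = gcd (a (p ^ r * m)) (a (p ^ (r - 1) * m)) in
        inv_cong (a (p ^ r * m) div g) (a (p ^ (r - 1) * m) div g) (int (p ^ r)))"
  shows "\<forall>k\<ge>1. a k \<noteq> 0"
proof (intro allI impI)
  fix k :: nat assume "k \<ge> 1"
  hence "inv_cong (a (2 * k) div gcd (a (2*k)) (a k)) (a k div gcd (a (2*k)) (a k)) (int 2)"
    using assms[rule_format, of 2 1 k] by (simp add: Let_def)
  thus "a k \<noteq> 0" using inv_cong_nz by fastforce
qed

lemma seg_imp_coprime_case:
  assumes seg: "strong_euler_gauss a" and p: "prime p" and r: "r \<ge> 1"
  shows "m \<noteq> 0 \<Longrightarrow> \<not> p dvd m \<Longrightarrow> EE (a (p^r*m)) (a (p^(r-1)*m)) (int (p^r))"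
proof (induction m rule: less_induct)
  case (less m)
  have nz: "\<forall>k\<ge>1. a k \<noteq> 0" using seg_nz[OF seg] .
  define n where "n = p^r * m"
  have p1: "p^r > 1" using r prime_gt_1_nat[OF p] by (intro one_less_power) auto
  have "p^r \<le> p^r * m" using less.prems(1) by simp
  hence n2: "n \<ge> 2" using p1 n_def by linarith
  have "inv_cong (A_minus a n div gcd (A_minus a n) (A_plus a n))
                 (A_plus a n div gcd (A_minus a n) (A_plus a n)) (int n)"
    using seg n2 unfolding strong_euler_gauss_def Let_def by (simp add: gcd.commute)
  hence En: "EE (A_minus a n) (A_plus a n) (int n)"
    using good_iff A_nz[OF nz] n2 by simp
  have "EE (A_plus a n) (A_minus a n) (int (p^r))"
    using EE_dvd[OF EE_sym[OF En], of "int (p^r)"] n_def by simp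
  define S where "S c = {e. e dvd m \<and> moebius e = c}" for c
  define H where "H c = (\<Prod>e\<in>S c. a (p^r*m div e))" for c
  define L where "L c = (\<Prod>e\<in>S c. a (p^(r-1)*m div e))" for c
  define H' where "H' = (\<Prod>e\<in>S 1 - {1}. a (p^r*m div e))"
  define L' where "L' = (\<Prod>e\<in>S 1 - {1}. a (p^(r-1)*m div e))"
  have finS: "finite (S c)" for c unfolding S_def using finite_S less.prems(1) .
  have oneS: "1 \<in> S 1" unfolding S_def using moebius_1 by simp
  have H1: "H 1 = a (p^r*m) * H'" unfolding H_def H'_def using prod.remove[OF finS oneS, of "\<lambda>e. a (p^r*m div e)"] by simp
  have L1: "L 1 = a (p^(r-1)*m) * L'" unfolding L_def L'_def using prod.remove[OF finS oneS, of "\<lambda>e. a (p^(r-1)*m div e)"] by simp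
  have Ap: "A_plus a n = a (p^r*m) * (H' * L (-1))"
    using A_split(1)[OF p less.prems(2) r, of a] H1 unfolding n_def H_def L_def S_def by simp
  have Am: "A_minus a n = a (p^(r-1)*m) * (L' * H (-1))"
    using A_split(2)[OF p less.prems(2) r, of a] L1 unfolding n_def H_def L_def S_def by simp
  have IH: "EE (a (p^r * (m div e))) (a (p^(r-1) * (m div e))) (int (p^r))"
    if "e dvd m" "e \<noteq> 1" for e
  proof (rule less.IH)
    have "e \<noteq> 0" using that less.prems(1) by auto
    hence "e \<ge> 2" using that by linarith
    thus "m div e < m" using less.prems(1) by simp
    show "m div e \<noteq> 0" using that less.prems(1) by (metis dvd_div_eq_0_iff)
    show "\<not> p dvd m div e"
    proof
      assume "p dvd m div e"
      hence "p dvd e * (m div e)" by simp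
      thus False using that(1) less.prems(2) by simp
    qed
  qed
  have E1: "EE H' L' (int (p^r))" unfolding H'_def L'_def
  proof (rule EE_prod)
    show "finite (S 1 - {1})" using finS by simp
    fix e assume "e \<in> S 1 - {1}"
    hence "e dvd m" "e \<noteq> 1" unfolding S_def by auto
    thus "EE (a (p^r*m div e)) (a (p^(r-1)*m div e)) (int (p^r))" using IH by (simp add: div_mult_swap)
  qed
  have E2: "EE (H (-1)) (L (-1)) (int (p^r))" unfolding H_def L_def
  proof (rule EE_prod)
    show "finite (S (-1))" using finS by simp
    fix e assume "e \<in> S (-1)"
    hence "e dvd m" "e \<noteq> 1" unfolding S_def using moebius_1 by auto
    thus "EE (a (p^r*m div e)) (a (p^(r-1)*m div e)) (int (p^r))" using IH by (simp add: div_mult_swap)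
  qed
  have E3: "EE (H' * L (-1)) (L' * H (-1)) (int (p^r))" using EE_mult[OF E1 EE_sym[OF E2]] .
  have nzH': "H' \<noteq> 0" unfolding H'_def
  proof -
    have "H 1 \<noteq> 0" unfolding H_def S_def using prod_nz[OF nz less.prems(1), of "p^r"] p1 by simp
    thus "(\<Prod>e\<in>S 1 - {1}. a (p^r*m div e)) \<noteq> 0" using H1 H'_def by simp
  qed
  have nzL: "L (-1) \<noteq> 0" unfolding L_def S_def
  proof -
    have "1 \<le> p^(r-1)" using p prime_gt_0_nat by (simp add: one_le_power Suc_le_eq)
    thus "(\<Prod>e\<in>{e. e dvd m \<and> moebius e = -1}. a (p^(r-1)*m div e)) \<noteq> 0"
      using prod_nz[OF nz less.prems(1), of "p^(r-1)"] by simp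
  qed
  show ?case
    using EE_cancel[of "a (p^r*m)" "H' * L (-1)" "a (p^(r-1)*m)" "L' * H (-1)"]
      \<open>EE (A_plus a n) (A_minus a n) (int (p^r))\<close> Ap Am E3 nzH' nzL by simp
qed

theorem lemma1:
  fixes a :: "nat \<Rightarrow> int"
  shows "strong_euler_gauss a \<longleftrightarrow>
    (\<forall>p r m. prime p \<and> r \<ge> 1 \<and> m \<ge> 1 \<longrightarrow>
      (let g = gcd (a (p ^ r * m)) (a (p ^ (r - 1) * m)) in
        inv_cong (a (p ^ r * m) div g) (a (p ^ (r - 1) * m) div g) (int (p ^ r))))"
  (is "?L \<longleftrightarrow> ?R")
proof
  assume seg: ?L
  have nz: "\<forall>k\<ge>1. a k \<noteq> 0" using seg_nz[OF seg] .
  show ?R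
  proof (intro allI impI)
    fix p r m :: nat assume h: "prime p \<and> r \<ge> 1 \<and> m \<ge> 1"
    hence p: "prime p" and r: "r \<ge> 1" and m: "m \<ge> 1" by auto
    define s where "s = multiplicity p m"
    define m' where "m' = m div p^s"
    have mm: "m = p^s * m'" unfolding m'_def s_def using multiplicity_dvd[of p m] by simp
    have nd: "\<not> p dvd m'" unfolding m'_def s_def
      using multiplicity_decompose[of m p] m p not_prime_unit by auto
    have m'0: "m' \<noteq> 0" using mm m by auto
    have "EE (a (p^(r+s)*m')) (a (p^(r+s-1)*m')) (int (p^(r+s)))"
      using seg_imp_coprime_case[OF seg p, of "r+s" m'] r m'0 nd by simp
    moreover have "p^r*m = p^(r+s)*m'" using mm by (simp add: power_add mult.assoc)
    moreover have "r+s-1 = (r-1)+s" using r by simp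
    hence "p^(r-1)*m = p^(r+s-1)*m'" using mm by (simp add: power_add mult.assoc)
    moreover have "int (p^r) dvd int (p^(r+s))" by (simp add: power_add)
    ultimately have E: "EE (a (p^r*m)) (a (p^(r-1)*m)) (int (p^r))"
      using EE_dvd[of "a (p^(r+s)*m')" "a (p^(r+s-1)*m')" "int (p^(r+s))" "int (p^r)"] by simp
    have "1 \<le> p^r" "1 \<le> p^(r-1)" using p prime_gt_0_nat by (simp_all add: one_le_power Suc_le_eq)
    hence nz1: "a (p^r*m) \<noteq> 0" and nz2: "a (p^(r-1)*m) \<noteq> 0" using nz m by (simp_all add: one_le_mult_iff)
    show "let g = gcd (a (p ^ r * m)) (a (p ^ (r - 1) * m)) in
        inv_cong (a (p ^ r * m) div g) (a (p ^ (r - 1) * m) div g) (int (p ^ r))"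
      unfolding Let_def using good_iff[OF nz1 nz2] E by simp
  qed
next
  assume Q: ?R
  have nz: "\<forall>k\<ge>1. a k \<noteq> 0" using Q_nz[OF Q] .
  have QE: "EE (a (p^r*m)) (a (p^(r-1)*m)) (int (p^r))" if "prime p" "r \<ge> 1" "m \<ge> 1" for p r m
  proof -
    have "1 \<le> p^r" "1 \<le> p^(r-1)" using that(1) prime_gt_0_nat by (simp_all add: one_le_power Suc_le_eq)
    hence nz1: "a (p^r*m) \<noteq> 0" and nz2: "a (p^(r-1)*m) \<noteq> 0" using nz that(3) by (simp_all add: one_le_mult_iff)
    show ?thesis using Q[rule_format, of p r m] that good_iff[OF nz1 nz2] by (simp add: Let_def)
  qed
  show ?L unfolding strong_euler_gauss_def Let_def
  proof (intro allI impI)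
    fix n :: nat assume n: "n \<ge> 1"
    have n0: "n \<noteq> 0" using n by simp
    have EEn: "EE (A_minus a n) (A_plus a n) (int n)"
    proof (rule crt_lemma[OF A_nz(2)[OF nz n0] A_nz(1)[OF nz n0] n0], intro allI impI)
      fix p assume pp: "prime p \<and> p dvd n"
      hence p: "prime p" by simp
      define r where "r = multiplicity p n"
      define m where "m = n div p^r"
      have nm: "n = p^r * m" unfolding m_def r_def using multiplicity_dvd[of p n] by simp
      have nd: "\<not> p dvd m" unfolding m_def r_def using multiplicity_decompose[of n p] n0 p not_prime_unit by auto
      have "r \<noteq> 0" unfolding r_def
        using multiplicity_eq_zero_iff[of n p] n0 p not_prime_unit pp by blast
      hence r1: "r \<ge> 1" by simp
      have m0: "m \<noteq> 0" using nm n0 by auto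
      have Qm: "\<forall>e. e dvd m \<longrightarrow> EE (a (p^r * (m div e))) (a (p^(r-1) * (m div e))) (int (p^r))"
      proof (intro allI impI)
        fix e assume "e dvd m"
        hence "m div e \<ge> 1" using m0 by (metis dvd_div_eq_0_iff less_one not_less)
        thus "EE (a (p^r * (m div e))) (a (p^(r-1) * (m div e))) (int (p^r))" using QE p r1 by blast
      qed
      have "EE (A_plus a n) (A_minus a n) (int (p^r))"
        unfolding nm A_split[OF p nd r1]
        using EE_mult[OF EE_ratio[OF m0 Qm, of "\<lambda>e. moebius e = 1"] EE_sym[OF EE_ratio[OF m0 Qm, of "\<lambda>e. moebius e = -1"]]]
        by (simp add: mult.commute)
      thus "EE (A_minus a n) (A_plus a n) (int (p ^ multiplicity p n))" using EE_sym r_def by simp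
    qed
    show "inv_cong (A_minus a n div gcd (A_plus a n) (A_minus a n))
                   (A_plus a n div gcd (A_plus a n) (A_minus a n)) (int n)"
      using good_iff[OF A_nz(2)[OF nz n0] A_nz(1)[OF nz n0]] EEn by (simp add: gcd.commute)
  qed
qed

end
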